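(* Let $f:(M,g_M)\to(N,g_N)$ be a conformal Riemannian morphism between Riemannian manifolds with $M$ compact. Then $\dim\ker(df_x)$ and the dimension of a Conf subspace $\mathrm{Conf}(df_x)$ corresponding to $df_x$ are constant on each connected component of $M$.
   Context: A linear map $T:V\to W$ between real inner-product spaces is a geometric function if there exist a subspace $C\subset V$ with $V=\ker T\oplus C$ and $r>0$ with $\langle T u,T v\rangle=r\langle u,v\rangle$ for all $u,v\in C$ ($r$ is a conformality factor, $C$ a Conf subspace $\mathrm{Conf}(T)$). A smooth $f:(M,g_M)\to(N,g_N)$ is a conformal Riemannian morphism if there is a smooth $\wedge_f:M\to\mathbb{R}^{+}$, called the Riemannian factor, such that each $df_x$ is a geometric function with conformality factor $\wedge_f(x)$. *)

theory Defs
  imports "HOL-Analysis.Analysis"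
begin

fun Ck_on :: "nat \<Rightarrow> ('a::euclidean_space \<Rightarrow> 'b::euclidean_space) \<Rightarrow> 'a set \<Rightarrow> bool" where
  "Ck_on 0 f U = continuous_on U f"
| "Ck_on (Suc k) f U =
     ((\<forall>x\<in>U. f differentiable (at x)) \<and>
      (\<forall>v. Ck_on k (\<lambda>x. frechet_derivative f (at x) v) U))"

definition smooth_on :: "('a::euclidean_space \<Rightarrow> 'b::euclidean_space) \<Rightarrow> 'a set \<Rightarrow> bool" where
  "smooth_on f U \<longleftrightarrow> open U \<and> (\<forall>k. Ck_on k f U)"

definition embedded_submanifold :: "'a::euclidean_space set \<Rightarrow> nat \<Rightarrow> bool" where
  "embedded_submanifold M m \<longleftrightarrow>
     (\<forall>p\<in>M. \<exists>U W (\<phi>::'a \<Rightarrow> 'a) \<psi> S.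
        open U \<and> p \<in> U \<and> open W \<and> smooth_on \<phi> U \<and> smooth_on \<psi> W \<and>
        \<phi> ` U = W \<and> (\<forall>x\<in>U. \<psi> (\<phi> x) = x) \<and> (\<forall>y\<in>W. \<phi> (\<psi> y) = y) \<and>
        subspace S \<and> dim S = m \<and> \<phi> ` (M \<inter> U) = W \<inter> S)"

definition curve_through :: "'a::euclidean_space set \<Rightarrow> 'a \<Rightarrow> (real \<Rightarrow> 'a) \<Rightarrow> bool" where
  "curve_through M p \<gamma> \<longleftrightarrow> smooth_on \<gamma> UNIV \<and> (\<forall>t. \<gamma> t \<in> M) \<and> \<gamma> 0 = p"

definition tangent_space :: "'a::euclidean_space set \<Rightarrow> 'a \<Rightarrow> 'a set" where
  "tangent_space M p = {v. \<exists>\<gamma>. curve_through M p \<gamma> \<and> (\<gamma> has_vector_derivative v) (at 0)}"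

definition smooth_map :: "'a::euclidean_space set \<Rightarrow> 'b::euclidean_space set \<Rightarrow> ('a \<Rightarrow> 'b) \<Rightarrow> bool" where
  "smooth_map M N f \<longleftrightarrow> f ` M \<subseteq> N \<and>
     (\<forall>p\<in>M. \<exists>U F. p \<in> U \<and> smooth_on F U \<and> (\<forall>x\<in>M \<inter> U. F x = f x))"

definition smooth_fun_on :: "'a::euclidean_space set \<Rightarrow> ('a \<Rightarrow> real) \<Rightarrow> bool" where
  "smooth_fun_on M h \<longleftrightarrow> (\<forall>p\<in>M. \<exists>U F. p \<in> U \<and> smooth_on F U \<and> (\<forall>x\<in>M \<inter> U. F x = h x))"

definition differential :: "'a::euclidean_space set \<Rightarrow> ('a \<Rightarrow> 'b::euclidean_space) \<Rightarrow> 'a \<Rightarrow> 'a \<Rightarrow> 'b" where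
  "differential M f p v = (SOME w. \<exists>\<gamma>. curve_through M p \<gamma> \<and>
      (\<gamma> has_vector_derivative v) (at 0) \<and> ((f \<circ> \<gamma>) has_vector_derivative w) (at 0))"

definition riemannian_metric :: "'a::euclidean_space set \<Rightarrow> ('a \<Rightarrow> 'a \<Rightarrow> 'a \<Rightarrow> real) \<Rightarrow> bool" where
  "riemannian_metric M g \<longleftrightarrow>
     (\<forall>p\<in>M. bilinear (g p) \<and>
        (\<forall>u\<in>tangent_space M p. \<forall>v\<in>tangent_space M p. g p u v = g p v u) \<and>
        (\<forall>u\<in>tangent_space M p. u \<noteq> 0 \<longrightarrow> g p u u > 0)) \<and>
     (\<forall>u v. smooth_fun_on M (\<lambda>p. g p u v))"

definition conf_subspace ::
  "('a::euclidean_space \<Rightarrow> 'b::euclidean_space) \<Rightarrow> 'a set \<Rightarrow> ('a \<Rightarrow> 'a \<Rightarrow> real) \<Rightarrow>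
   ('b \<Rightarrow> 'b \<Rightarrow> real) \<Rightarrow> 'a set \<Rightarrow> real \<Rightarrow> bool" where
  "conf_subspace T V gV gW C r \<longleftrightarrow>
     subspace C \<and> C \<subseteq> V \<and> r > 0 \<and>
     {v\<in>V. T v = 0} \<inter> C = {0} \<and>
     {k + c | k c. k \<in> {v\<in>V. T v = 0} \<and> c \<in> C} = V \<and>
     (\<forall>u\<in>C. \<forall>v\<in>C. gW (T u) (T v) = r * gV u v)"

definition geometric_function ::
  "('a::euclidean_space \<Rightarrow> 'b::euclidean_space) \<Rightarrow> 'a set \<Rightarrow> ('a \<Rightarrow> 'a \<Rightarrow> real) \<Rightarrow>
   ('b \<Rightarrow> 'b \<Rightarrow> real) \<Rightarrow> real \<Rightarrow> bool" where
  "geometric_function T V gV gW r \<longleftrightarrow> (\<exists>C. conf_subspace T V gV gW C r)"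

definition conformal_riemannian_morphism ::
  "'a::euclidean_space set \<Rightarrow> ('a \<Rightarrow> 'a \<Rightarrow> 'a \<Rightarrow> real) \<Rightarrow>
   'b::euclidean_space set \<Rightarrow> ('b \<Rightarrow> 'b \<Rightarrow> 'b \<Rightarrow> real) \<Rightarrow> ('a \<Rightarrow> 'b) \<Rightarrow> bool" where
  "conformal_riemannian_morphism M gM N gN f \<longleftrightarrow>
     smooth_map M N f \<and>
     (\<exists>\<Lambda>. smooth_fun_on M \<Lambda> \<and> (\<forall>x\<in>M. \<Lambda> x > 0) \<and>
        (\<forall>x\<in>M. geometric_function (differential M f x) (tangent_space M x)
                   (gM x) (gN (f x)) (\<Lambda> x)))"

end

theory Submission
  imports Defs
begin

lemma deriv_eq_open:
  assumes "open U" "x \<in> U" "\<forall>y\<in>U. f y = g y"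
  shows "frechet_derivative f (at x) = frechet_derivative g (at x)"
proof -
  have "\<And>f'. (f has_derivative f') (at x) \<longleftrightarrow> (g has_derivative f') (at x)"
    using assms has_derivative_transform_within_open by (metis (no_types, lifting))
  then show ?thesis unfolding frechet_derivative_def by simp
qed

lemma differentiable_eq_open:
  assumes "open U" "x \<in> U" "\<forall>y\<in>U. f y = g y"
  shows "f differentiable (at x) \<longleftrightarrow> g differentiable (at x)"
proof -
  have "\<And>f'. (f has_derivative f') (at x) \<longleftrightarrow> (g has_derivative f') (at x)"
    using assms has_derivative_transform_within_open by (metis (no_types, lifting))
  then show ?thesis unfolding differentiable_def by simp
qed

lemma Ck_on_cong:
  assumes "open U" "\<forall>x\<in>U. f x = g x"
  shows "Ck_on k f U = Ck_on k g U"
  using assms(2)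
proof (induction k arbitrary: f g)
  case 0
  have "continuous_on U f = continuous_on U g"
    by (rule continuous_on_cong[OF refl]) (use 0 in blast)
  then show ?case by (simp only: Ck_on.simps)
next
  case (Suc k)
  have d: "(\<forall>x\<in>U. f differentiable (at x)) = (\<forall>x\<in>U. g differentiable (at x))"
  proof -
    have "(f differentiable (at x)) = (g differentiable (at x))" if "x \<in> U" for x
      by (rule differentiable_eq_open[OF assms(1) that Suc.prems])
    then show ?thesis by blast
  qed
  have e: "frechet_derivative f (at x) = frechet_derivative g (at x)" if "x \<in> U" for x
    by (rule deriv_eq_open[OF assms(1) that Suc.prems])
  have "Ck_on k (\<lambda>x. frechet_derivative f (at x) v) U = Ck_on k (\<lambda>x. frechet_derivative g (at x) v) U" for v
    by (rule Suc.IH) (use e in auto)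
  then have "(\<forall>v. Ck_on k (\<lambda>x. frechet_derivative f (at x) v) U) = (\<forall>v. Ck_on k (\<lambda>x. frechet_derivative g (at x) v) U)"
    by blast
  then show ?case using d by (simp only: Ck_on.simps)
qed

lemma Ck_on_Suc_imp: "Ck_on (Suc k) f U \<Longrightarrow> Ck_on k f U"
proof (induction k arbitrary: f)
  case 0
  then have "\<forall>x\<in>U. continuous (at x) f" using differentiable_imp_continuous_within by auto
  then show ?case by (simp add: continuous_at_imp_continuous_on)
next
  case (Suc k)
  then show ?case by simp
qed


lemma Ck_on_const: "Ck_on k (\<lambda>x. c) U"
  by (induction k arbitrary: c) auto

lemma Ck_on_add:
  assumes "open U" "Ck_on k f U" "Ck_on k g U"
  shows "Ck_on k (\<lambda>x. f x + g x) U"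
  using assms(2,3)
proof (induction k arbitrary: f g)
  case 0
  then show ?case by (simp add: continuous_on_add)
next
  case (Suc k)
  have fd: "\<forall>x\<in>U. f differentiable (at x)" "\<forall>x\<in>U. g differentiable (at x)"
    using Suc.prems unfolding Ck_on.simps by blast+
  have eq: "\<forall>x\<in>U. frechet_derivative (\<lambda>x. f x + g x) (at x) v
      = frechet_derivative f (at x) v + frechet_derivative g (at x) v" for v
  proof
    fix x assume "x \<in> U"
    then have d1: "(f has_derivative frechet_derivative f (at x)) (at x)"
      and d2: "(g has_derivative frechet_derivative g (at x)) (at x)"
      using fd frechet_derivative_works by blast+
    have der: "((\<lambda>x. f x + g x) has_derivative (\<lambda>v. frechet_derivative f (at x) v + frechet_derivative g (at x) v)) (at x)"
      by (rule has_derivative_add[OF d1 d2])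
    show "frechet_derivative (\<lambda>x. f x + g x) (at x) v
      = frechet_derivative f (at x) v + frechet_derivative g (at x) v"
      using fun_cong[OF frechet_derivative_at[OF der], of v] by simp
  qed
  have "Ck_on k (\<lambda>x. frechet_derivative (\<lambda>x. f x + g x) (at x) v) U" for v
  proof -
    have p1: "Ck_on k (\<lambda>x. frechet_derivative f (at x) v) U" "Ck_on k (\<lambda>x. frechet_derivative g (at x) v) U"
      using Suc.prems unfolding Ck_on.simps by blast+
    have "Ck_on k (\<lambda>x. frechet_derivative f (at x) v + frechet_derivative g (at x) v) U"
      by (rule Suc.IH[OF p1])
    then show ?thesis using Ck_on_cong[OF assms(1) eq[of v]] by (simp only:)
  qed
  moreover have "\<forall>x\<in>U. (\<lambda>x. f x + g x) differentiable (at x)"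
  proof
    fix x assume "x \<in> U"
    then have "f differentiable (at x)" "g differentiable (at x)" using fd by blast+
    then show "(\<lambda>x. f x + g x) differentiable (at x)" by (rule differentiable_add)
  qed
  ultimately show ?case unfolding Ck_on.simps by blast
qed

lemma Ck_on_scale:
  fixes a :: "'a::euclidean_space \<Rightarrow> real" and f :: "'a \<Rightarrow> 'b::euclidean_space"
  assumes "open U" "Ck_on k a U" "Ck_on k f U"
  shows "Ck_on k (\<lambda>x. a x *\<^sub>R f x) U"
  using assms(2,3)
proof (induction k arbitrary: a f)
  case 0
  then show ?case by (simp add: continuous_on_scaleR)
next
  case (Suc k)
  have fd: "\<forall>x\<in>U. a differentiable (at x)" "\<forall>x\<in>U. f differentiable (at x)"
    using Suc.prems unfolding Ck_on.simps by blast+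
  have eq: "\<forall>x\<in>U. frechet_derivative (\<lambda>x. a x *\<^sub>R f x) (at x) v
      = a x *\<^sub>R frechet_derivative f (at x) v + frechet_derivative a (at x) v *\<^sub>R f x" for v
  proof
    fix x assume "x \<in> U"
    then have d1: "(a has_derivative frechet_derivative a (at x)) (at x)"
      and d2: "(f has_derivative frechet_derivative f (at x)) (at x)"
      using fd frechet_derivative_works by blast+
    have der: "((\<lambda>x. a x *\<^sub>R f x) has_derivative (\<lambda>v. a x *\<^sub>R frechet_derivative f (at x) v + frechet_derivative a (at x) v *\<^sub>R f x)) (at x)"
      by (rule has_derivative_scaleR[OF d1 d2])
    show "frechet_derivative (\<lambda>x. a x *\<^sub>R f x) (at x) v
      = a x *\<^sub>R frechet_derivative f (at x) v + frechet_derivative a (at x) v *\<^sub>R f x"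
      using fun_cong[OF frechet_derivative_at[OF der], of v] by simp
  qed
  have "Ck_on k (\<lambda>x. frechet_derivative (\<lambda>x. a x *\<^sub>R f x) (at x) v) U" for v
  proof -
    have a0: "Ck_on k a U" and f0: "Ck_on k f U"
      using Ck_on_Suc_imp Suc.prems by blast+
    have a1: "Ck_on k (\<lambda>x. frechet_derivative a (at x) v) U" and f1: "Ck_on k (\<lambda>x. frechet_derivative f (at x) v) U"
      using Suc.prems unfolding Ck_on.simps by blast+
    have "Ck_on k (\<lambda>x. a x *\<^sub>R frechet_derivative f (at x) v + frechet_derivative a (at x) v *\<^sub>R f x) U"
      by (rule Ck_on_add[OF assms(1) Suc.IH[OF a0 f1] Suc.IH[OF a1 f0]])
    then show ?thesis using Ck_on_cong[OF assms(1) eq[of v]] by (simp only:)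
  qed
  moreover have "\<forall>x\<in>U. (\<lambda>x. a x *\<^sub>R f x) differentiable (at x)"
  proof
    fix x assume "x \<in> U"
    then have "a differentiable (at x)" "f differentiable (at x)" using fd by blast+
    then show "(\<lambda>x. a x *\<^sub>R f x) differentiable (at x)" by (rule differentiable_scaleR)
  qed
  ultimately show ?case unfolding Ck_on.simps by blast
qed

lemma Ck_on_inner:
  fixes f :: "'a::euclidean_space \<Rightarrow> 'b::euclidean_space"
  assumes "open U" "Ck_on k f U"
  shows "Ck_on k (\<lambda>x. f x \<bullet> c) U"
  using assms(2)
proof (induction k arbitrary: f)
  case 0
  then show ?case by (simp add: continuous_on_inner)
next
  case (Suc k)
  have fd: "\<forall>x\<in>U. f differentiable (at x)" using Suc.prems by auto
  have eq: "\<forall>x\<in>U. frechet_derivative (\<lambda>x. f x \<bullet> c) (at x) v = frechet_derivative f (at x) v \<bullet> c" for v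
  proof
    fix x assume "x \<in> U"
    then have "((\<lambda>x. f x \<bullet> c) has_derivative (\<lambda>v. frechet_derivative f (at x) v \<bullet> c)) (at x)"
      using fd by (auto intro!: derivative_eq_intros simp: frechet_derivative_works[symmetric])
    then show "frechet_derivative (\<lambda>x. f x \<bullet> c) (at x) v = frechet_derivative f (at x) v \<bullet> c"
      using frechet_derivative_at by metis
  qed
  have "Ck_on k (\<lambda>x. frechet_derivative (\<lambda>x. f x \<bullet> c) (at x) v) U" for v
    using Ck_on_cong[OF assms(1) eq[of v]] Suc.IH Suc.prems by simp
  moreover have "\<forall>x\<in>U. (\<lambda>x. f x \<bullet> c) differentiable (at x)"
    using fd by (auto intro!: derivative_eq_intros simp: differentiable_def)
  ultimately show ?case by simp
qed

lemma Ck_on_sum: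
  assumes "open U" "finite I" "\<forall>i\<in>I. Ck_on k (f i) U"
  shows "Ck_on k (\<lambda>x. \<Sum>i\<in>I. f i x) U"
  using assms(2,3)
proof (induction I rule: finite_induct)
  case empty
  then show ?case by (simp add: Ck_on_const)
next
  case (insert i I)
  then show ?case using Ck_on_add[OF assms(1), of k "f i" "\<lambda>x. \<Sum>i\<in>I. f i x"] by simp
qed

lemma Ck_on_compose:
  fixes h :: "'a::euclidean_space \<Rightarrow> 'b::euclidean_space" and g :: "'b \<Rightarrow> 'c::euclidean_space"
  assumes "open U" "open V" "h ` U \<subseteq> V" "Ck_on k g V" "Ck_on k h U"
  shows "Ck_on k (\<lambda>x. g (h x)) U"
  using assms(4,5)
proof (induction k arbitrary: g)
  case 0
  have c1: "continuous_on V g" using 0 by simp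
  have c2: "continuous_on U h" using 0 by simp
  have "continuous_on U (\<lambda>x. g (h x))" by (rule continuous_on_compose2[OF c1 c2 assms(3)])
  then show ?case by simp
next
  case (Suc k)
  have gd: "\<forall>y\<in>V. g differentiable (at y)" and hd: "\<forall>x\<in>U. h differentiable (at x)"
    using Suc.prems unfolding Ck_on.simps by blast+
  have hV: "\<forall>x\<in>U. h x \<in> V" using assms(3) by auto
  have eq: "\<forall>x\<in>U. frechet_derivative (\<lambda>x. g (h x)) (at x) v
      = (\<Sum>i\<in>Basis. (frechet_derivative h (at x) v \<bullet> i) *\<^sub>R frechet_derivative g (at (h x)) i)" for v
  proof
    fix x assume x: "x \<in> U"
    have "frechet_derivative (\<lambda>x. g (h x)) (at x) v = frechet_derivative g (at (h x)) (frechet_derivative h (at x) v)"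
      using frechet_derivative_compose[of h x g] hd gd hV x by (simp add: o_def)
    also have "\<dots> = (\<Sum>i\<in>Basis. (frechet_derivative h (at x) v \<bullet> i) *\<^sub>R frechet_derivative g (at (h x)) i)"
    proof -
      have lin: "linear (frechet_derivative g (at (h x)))"
        using gd hV x linear_frechet_derivative by blast
      have "frechet_derivative g (at (h x)) (frechet_derivative h (at x) v)
          = frechet_derivative g (at (h x)) (\<Sum>i\<in>Basis. (frechet_derivative h (at x) v \<bullet> i) *\<^sub>R i)"
        by (simp add: euclidean_representation)
      also have "\<dots> = (\<Sum>i\<in>Basis. (frechet_derivative h (at x) v \<bullet> i) *\<^sub>R frechet_derivative g (at (h x)) i)"
        using lin by (simp add: linear_sum linear_scale)
      finally show ?thesis .
    qed
    finally show "frechet_derivative (\<lambda>x. g (h x)) (at x) v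
      = (\<Sum>i\<in>Basis. (frechet_derivative h (at x) v \<bullet> i) *\<^sub>R frechet_derivative g (at (h x)) i)" .
  qed
  have "Ck_on k (\<lambda>x. frechet_derivative (\<lambda>x. g (h x)) (at x) v) U" for v
  proof -
    have "Ck_on k (\<lambda>x. \<Sum>i\<in>Basis. (frechet_derivative h (at x) v \<bullet> i) *\<^sub>R frechet_derivative g (at (h x)) i) U"
    proof (rule Ck_on_sum[OF assms(1) finite_Basis], rule ballI)
      fix i :: 'b assume "i \<in> Basis"
      have h1: "Ck_on k (\<lambda>x. frechet_derivative h (at x) v) U"
        using Suc.prems unfolding Ck_on.simps by blast+
      have a: "Ck_on k (\<lambda>x. frechet_derivative h (at x) v \<bullet> i) U"
        using Ck_on_inner[OF assms(1) h1] .
      have g1: "Ck_on k (\<lambda>y. frechet_derivative g (at y) i) V"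
        using Suc.prems unfolding Ck_on.simps by blast+
      have h0: "Ck_on k h U" using Ck_on_Suc_imp Suc.prems by blast
      have b: "Ck_on k (\<lambda>x. frechet_derivative g (at (h x)) i) U"
        using Suc.IH[OF g1 h0] .
      show "Ck_on k (\<lambda>x. (frechet_derivative h (at x) v \<bullet> i) *\<^sub>R frechet_derivative g (at (h x)) i) U"
        using Ck_on_scale[OF assms(1) a b] .
    qed
    then show ?thesis using Ck_on_cong[OF assms(1) eq[of v]] by (simp only:)
  qed
  moreover have "\<forall>x\<in>U. (\<lambda>x. g (h x)) differentiable (at x)"
  proof
    fix x assume "x \<in> U"
    then have "(g \<circ> h) differentiable (at x)"
      using differentiable_chain_at[of h x g] hd gd hV by blast
    then show "(\<lambda>x. g (h x)) differentiable (at x)" by (simp add: o_def)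
  qed
  ultimately show ?case unfolding Ck_on.simps by blast
qed

lemma Ck_on_sincos:
  "Ck_on k (\<lambda>t::real. a * sin (c * t) + b * cos (c * t)) U"
proof (induction k arbitrary: a b)
  case 0
  then show ?case by (auto intro!: continuous_intros)
next
  case (Suc k)
  have der: "((\<lambda>t::real. a * sin (c * t) + b * cos (c * t)) has_derivative
        (\<lambda>v. (- (v * b * c)) * sin (c * t) + (v * a * c) * cos (c * t))) (at t)" for t
  proof -
    have "((\<lambda>t::real. a * sin (c * t) + b * cos (c * t)) has_real_derivative
        (a * (cos (c * t) * c) + b * (- sin (c * t) * c))) (at t)"
      by (auto intro!: derivative_eq_intros)
    then have "((\<lambda>t::real. a * sin (c * t) + b * cos (c * t)) has_derivative
        (*) (a * (cos (c * t) * c) + b * (- sin (c * t) * c))) (at t)"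
      by (rule has_field_derivative_imp_has_derivative)
    moreover have "(*) (a * (cos (c * t) * c) + b * (- sin (c * t) * c))
       = (\<lambda>v. (- (v * b * c)) * sin (c * t) + (v * a * c) * cos (c * t))"
      by (auto simp: algebra_simps fun_eq_iff)
    ultimately show ?thesis by simp
  qed
  have fd: "frechet_derivative (\<lambda>t::real. a * sin (c * t) + b * cos (c * t)) (at t)
     = (\<lambda>v. (- (v * b * c)) * sin (c * t) + (v * a * c) * cos (c * t))" for t
    using frechet_derivative_at[OF der[of t]] by simp
  have "Ck_on k (\<lambda>t. frechet_derivative (\<lambda>t::real. a * sin (c * t) + b * cos (c * t)) (at t) v) U" for v
    unfolding fd by (rule Suc.IH)
  moreover have "(\<lambda>t::real. a * sin (c * t) + b * cos (c * t)) differentiable (at t)" for t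
    using der[of t] unfolding differentiable_def by blast
  ultimately show ?case by simp
qed


lemma quot_eq:
  fixes a w :: "'a::real_normed_vector" and h :: real
  assumes "h \<noteq> 0"
  shows "norm (a - h *\<^sub>R w) / \<bar>h\<bar> = norm (a /\<^sub>R h - w)"
proof -
  have "a /\<^sub>R h - w = (1 / h) *\<^sub>R (a - h *\<^sub>R w)"
    using assms by (simp add: algebra_simps inverse_eq_divide)
  then have "norm (a /\<^sub>R h - w) = norm (a - h *\<^sub>R w) / \<bar>h\<bar>"
    by (simp add: divide_simps)
  then show ?thesis by simp
qed

lemma vd_in_subspace:
  fixes \<eta> :: "real \<Rightarrow> 'a::euclidean_space"
  assumes "subspace S" "(\<eta> has_vector_derivative w) (at 0)"
    and "eventually (\<lambda>t. \<eta> t \<in> S) (at 0)" "\<eta> 0 \<in> S"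
  shows "w \<in> S"
proof -
  have "((\<lambda>h. norm (\<eta> (0 + h) - \<eta> 0 - h *\<^sub>R w) / norm h) \<longlongrightarrow> 0) (at 0)"
    using assms(2) unfolding has_vector_derivative_def has_derivative_at by blast
  then have t1: "((\<lambda>h. norm ((\<eta> h - \<eta> 0) - h *\<^sub>R w) / norm h) \<longlongrightarrow> 0) (at 0)" by simp
  have ev: "eventually (\<lambda>h. norm ((\<eta> h - \<eta> 0) - h *\<^sub>R w) / norm h = norm ((\<eta> h - \<eta> 0) /\<^sub>R h - w)) (at (0::real))"
    unfolding eventually_at_filter by (rule always_eventually) (simp add: quot_eq)
  have "((\<lambda>h. norm ((\<eta> h - \<eta> 0) /\<^sub>R h - w)) \<longlongrightarrow> 0) (at 0)"
    using Lim_transform_eventually[OF t1 ev] .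
  then have "((\<lambda>h. (\<eta> h - \<eta> 0) /\<^sub>R h - w) \<longlongrightarrow> 0) (at 0)"
    by (simp only: tendsto_norm_zero_iff)
  then have lim: "((\<lambda>h. (\<eta> h - \<eta> 0) /\<^sub>R h) \<longlongrightarrow> w) (at 0)"
    by (simp only: Lim_null[symmetric])
  have "eventually (\<lambda>h. (\<eta> h - \<eta> 0) /\<^sub>R h \<in> S) (at 0)"
    using assms(3) by eventually_elim (use assms(1,4) in \<open>simp add: subspace_scale subspace_diff\<close>)
  then show ?thesis
    using Lim_in_closed_set[OF closed_subspace[OF assms(1)] _ _ lim] by simp
qed

lemma smooth_onD:
  assumes "smooth_on F U"
  shows "open U" "\<forall>x\<in>U. F differentiable (at x)"
    "\<forall>v. continuous_on U (\<lambda>x. frechet_derivative F (at x) v)" "continuous_on U F"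
proof -
  have c2: "Ck_on (Suc (Suc 0)) F U" and c0: "Ck_on 0 F U" using assms unfolding smooth_on_def by blast+
  show "open U" using assms unfolding smooth_on_def by blast
  show "\<forall>x\<in>U. F differentiable (at x)" using c2 unfolding Ck_on.simps by blast
  show "\<forall>v. continuous_on U (\<lambda>x. frechet_derivative F (at x) v)"
  proof
    fix v
    have "Ck_on (Suc 0) (\<lambda>x. frechet_derivative F (at x) v) U" using c2 unfolding Ck_on.simps(2)[of "Suc 0"] by blast
    then have "Ck_on 0 (\<lambda>x. frechet_derivative F (at x) v) U" by (rule Ck_on_Suc_imp)
    then show "continuous_on U (\<lambda>x. frechet_derivative F (at x) v)" by simp
  qed
  show "continuous_on U F" using c0 by simp
qed

locale chart =
  fixes M :: "'a::euclidean_space set" and U W :: "'a set" and \<phi> \<psi> :: "'a \<Rightarrow> 'a" and S :: "'a set"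
  assumes oU: "open U" and oW: "open W" and sphi: "smooth_on \<phi> U" and spsi: "smooth_on \<psi> W"
    and img: "\<phi> ` U = W" and inv1: "\<forall>x\<in>U. \<psi> (\<phi> x) = x" and inv2: "\<forall>y\<in>W. \<phi> (\<psi> y) = y"
    and sS: "subspace S" and MU: "\<phi> ` (M \<inter> U) = W \<inter> S"
begin

definition B where "B x = frechet_derivative \<psi> (at (\<phi> x))"

lemma phiW: "x \<in> U \<Longrightarrow> \<phi> x \<in> W" using img by blast

lemma phi_diff: "x \<in> U \<Longrightarrow> (\<phi> has_derivative frechet_derivative \<phi> (at x)) (at x)"
  using smooth_onD(2)[OF sphi] frechet_derivative_works by blast

lemma psi_diff: "y \<in> W \<Longrightarrow> (\<psi> has_derivative frechet_derivative \<psi> (at y)) (at y)"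
  using smooth_onD(2)[OF spsi] frechet_derivative_works by blast

lemma B_left_inv:
  assumes "x \<in> U"
  shows "B x (frechet_derivative \<phi> (at x) v) = v"
proof -
  have "((\<psi> \<circ> \<phi>) has_derivative (frechet_derivative \<psi> (at (\<phi> x)) \<circ> frechet_derivative \<phi> (at x))) (at x)"
    by (rule diff_chain_at[OF phi_diff[OF assms] psi_diff[OF phiW[OF assms]]])
  then have d1: "((\<lambda>x. \<psi> (\<phi> x)) has_derivative (\<lambda>v. B x (frechet_derivative \<phi> (at x) v))) (at x)"
    unfolding B_def o_def .
  have d2: "((\<lambda>x. \<psi> (\<phi> x)) has_derivative (\<lambda>v. v)) (at x)"
    using has_derivative_transform_within_open[OF has_derivative_ident oU assms, of "\<lambda>x. \<psi> (\<phi> x)"]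
      inv1 by simp
  show ?thesis using fun_cong[OF has_derivative_unique[OF d1 d2], of v] by simp
qed

lemma B_linear: "x \<in> U \<Longrightarrow> linear (B x)"
  unfolding B_def using smooth_onD(2)[OF spsi] phiW linear_frechet_derivative by blast

lemma B_inj: "x \<in> U \<Longrightarrow> inj (B x)"
proof -
  assume x: "x \<in> U"
  have "surj (B x)"
    by (rule surjI[where f="frechet_derivative \<phi> (at x)"]) (rule B_left_inv[OF x])
  then show ?thesis using linear_surj_imp_inj[OF B_linear[OF x]] by simp
qed

lemma tangent_sub:
  assumes x: "x \<in> M \<inter> U" and v: "v \<in> tangent_space M x"
  shows "v \<in> B x ` S"
proof -
  obtain \<gamma> where c: "curve_through M x \<gamma>" and vd: "(\<gamma> has_vector_derivative v) (at 0)"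
    using v unfolding tangent_space_def by blast
  have g0: "\<gamma> 0 = x" and gM: "\<forall>t. \<gamma> t \<in> M" using c unfolding curve_through_def by auto
  have xU: "x \<in> U" using x by simp
  have gcont: "continuous (at 0) \<gamma>"
    using differentiable_imp_continuous_within[OF differentiableI_vector[OF vd]] .
  have evU: "eventually (\<lambda>t. \<gamma> t \<in> U) (at 0)"
    using topological_tendstoD[OF gcont[unfolded continuous_at] oU] g0 xU by simp
  have pd: "(\<phi> has_derivative frechet_derivative \<phi> (at x)) (at (\<gamma> 0))" using phi_diff[OF xU] g0 by simp
  have "((\<phi> \<circ> \<gamma>) has_derivative (frechet_derivative \<phi> (at x) \<circ> (\<lambda>h. h *\<^sub>R v))) (at 0)"
    using diff_chain_at[OF vd[unfolded has_vector_derivative_def] pd] .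
  moreover have "frechet_derivative \<phi> (at x) \<circ> (\<lambda>h. h *\<^sub>R v) = (\<lambda>h. h *\<^sub>R frechet_derivative \<phi> (at x) v)"
  proof -
    have lin: "linear (frechet_derivative \<phi> (at x))"
      using linear_frechet_derivative smooth_onD(2)[OF sphi] xU by blast
    show ?thesis by (rule ext) (simp add: o_def linear_scale[OF lin])
  qed
  ultimately have "((\<phi> \<circ> \<gamma>) has_vector_derivative frechet_derivative \<phi> (at x) v) (at 0)"
    unfolding has_vector_derivative_def by simp
  moreover have "eventually (\<lambda>t. (\<phi> \<circ> \<gamma>) t \<in> S) (at 0)"
    using evU by eventually_elim (use gM MU in auto)
  moreover have "(\<phi> \<circ> \<gamma>) 0 \<in> S" using g0 x MU by auto
  ultimately have inS: "frechet_derivative \<phi> (at x) v \<in> S" by (rule vd_in_subspace[OF sS])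
  show ?thesis by (rule image_eqI[where x="frechet_derivative \<phi> (at x) v"]) (simp_all add: B_left_inv[OF xU] inS)
qed

lemma tangent_sup:
  assumes x: "x \<in> M \<inter> U" and s: "s \<in> S"
  shows "B x s \<in> tangent_space M x"
proof -
  have px: "\<phi> x \<in> W \<inter> S" using x MU by auto
  obtain e where e: "e > 0" "ball (\<phi> x) e \<subseteq> W" using oW px openE by blast
  define \<epsilon> where "\<epsilon> = e / (norm s + 1)"
  have ep: "\<epsilon> > 0" unfolding \<epsilon>_def
    by (rule divide_pos_pos[OF e(1) add_nonneg_pos[OF norm_ge_zero zero_less_one]])
  have ens: "\<epsilon> * norm s < e"
  proof -
    have "\<epsilon> * norm s < \<epsilon> * (norm s + 1)" using ep by simp
    also have "\<dots> = e"
    proof -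
      have "norm s + 1 \<noteq> 0" by (smt (verit) norm_ge_zero)
      then show ?thesis unfolding \<epsilon>_def by simp
    qed
    finally show ?thesis .
  qed
  define a where "a = (\<lambda>t::real. \<epsilon> * sin ((1/\<epsilon>) * t) + 0 * cos ((1/\<epsilon>) * t))"
  define h where "h = (\<lambda>t. \<phi> x + a t *\<^sub>R s)"
  have hW: "h t \<in> W \<inter> S" for t
  proof
    have "norm (a t *\<^sub>R s) = \<epsilon> * \<bar>sin ((1/\<epsilon>) * t)\<bar> * norm s"
      using ep by (simp add: a_def abs_mult)
    also have "\<dots> \<le> \<epsilon> * 1 * norm s"
      by (intro mult_right_mono mult_left_mono) (use ep in auto)
    finally have "norm (a t *\<^sub>R s) < e" using ens by simp
    then show "h t \<in> W" using e unfolding h_def by (auto simp: dist_norm)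
    show "h t \<in> S" unfolding h_def using px s sS by (auto intro: subspace_add subspace_scale)
  qed
  have aC: "Ck_on k a UNIV" for k unfolding a_def by (rule Ck_on_sincos)
  have hC: "Ck_on k h UNIV" for k
    unfolding h_def
    by (rule Ck_on_add[OF open_UNIV Ck_on_const Ck_on_scale[OF open_UNIV aC Ck_on_const]])
  define \<gamma> where "\<gamma> = (\<lambda>t. \<psi> (h t))"
  have hWi: "h ` UNIV \<subseteq> W" using hW by blast
  have psiC: "Ck_on k \<psi> W" for k using spsi unfolding smooth_on_def by blast
  have gC: "Ck_on k \<gamma> UNIV" for k
    unfolding \<gamma>_def by (rule Ck_on_compose[OF open_UNIV oW hWi psiC hC])
  have gM: "\<gamma> t \<in> M" for t
  proof -
    have "h t \<in> \<phi> ` (M \<inter> U)" using hW MU by simp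
    then obtain z where z: "z \<in> M \<inter> U" "h t = \<phi> z" by (rule imageE)
    then show ?thesis unfolding \<gamma>_def using inv1 by simp
  qed
  have h0: "h 0 = \<phi> x" by (simp add: h_def a_def)
  have g0: "\<gamma> 0 = x" using h0 inv1 x by (simp add: \<gamma>_def)
  have "(a has_real_derivative (\<epsilon> * (cos ((1/\<epsilon>) * 0) * (1/\<epsilon>)) + 0 * (- sin ((1/\<epsilon>) * 0) * (1/\<epsilon>)))) (at 0)"
    unfolding a_def by (auto intro!: derivative_eq_intros)
  then have ad: "(a has_real_derivative 1) (at 0)" using ep by simp
  have "((\<lambda>t. a t *\<^sub>R s) has_vector_derivative (a 0 *\<^sub>R 0 + 1 *\<^sub>R s)) (at 0)"
    by (rule has_vector_derivative_scaleR[OF ad has_vector_derivative_const])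
  then have "((\<lambda>t. a t *\<^sub>R s) has_vector_derivative s) (at 0)" by simp
  then have "((\<lambda>t. \<phi> x + a t *\<^sub>R s) has_vector_derivative (0 + s)) (at 0)"
    by (rule has_vector_derivative_add[OF has_vector_derivative_const])
  then have hd: "(h has_vector_derivative s) (at 0)" unfolding h_def by simp
  have "((\<psi> \<circ> h) has_derivative (B x \<circ> (\<lambda>t. t *\<^sub>R s))) (at 0)"
    using diff_chain_at[OF hd[unfolded has_vector_derivative_def] psi_diff[of "h 0"]] hW px
    unfolding B_def h0 by simp
  moreover have "B x \<circ> (\<lambda>t. t *\<^sub>R s) = (\<lambda>t. t *\<^sub>R B x s)"
    using B_linear x by (auto simp: o_def linear_scale)
  ultimately have "(\<gamma> has_vector_derivative B x s) (at 0)"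
    unfolding has_vector_derivative_def \<gamma>_def o_def by simp
  moreover have "curve_through M x \<gamma>"
    unfolding curve_through_def smooth_on_def using gC gM g0 by auto
  ultimately show ?thesis unfolding tangent_space_def by blast
qed

lemma tangent_eq:
  assumes "x \<in> M \<inter> U" shows "tangent_space M x = B x ` S"
proof (rule equalityI)
  show "tangent_space M x \<subseteq> B x ` S" using tangent_sub[OF assms] by (rule subsetI)
  show "B x ` S \<subseteq> tangent_space M x" using tangent_sup[OF assms] by (rule image_subsetI)
qed

end

lemma chart_exists:
  assumes "embedded_submanifold M m" "x0 \<in> M"
  shows "\<exists>U W \<phi> \<psi> S. chart M U W \<phi> \<psi> S \<and> x0 \<in> U \<and> dim S = m"
proof -
  have "\<exists>U W (\<phi>::'a \<Rightarrow> 'a) \<psi> S.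
        open U \<and> x0 \<in> U \<and> open W \<and> smooth_on \<phi> U \<and> smooth_on \<psi> W \<and>
        \<phi> ` U = W \<and> (\<forall>x\<in>U. \<psi> (\<phi> x) = x) \<and> (\<forall>y\<in>W. \<phi> (\<psi> y) = y) \<and>
        subspace S \<and> dim S = m \<and> \<phi> ` (M \<inter> U) = W \<inter> S"
    using assms(1)[unfolded embedded_submanifold_def, rule_format, OF assms(2)] .
  then obtain U W and \<phi> :: "'a \<Rightarrow> 'a" and \<psi> S where H: "open U \<and> x0 \<in> U \<and> open W \<and> smooth_on \<phi> U \<and> smooth_on \<psi> W \<and>
        \<phi> ` U = W \<and> (\<forall>x\<in>U. \<psi> (\<phi> x) = x) \<and> (\<forall>y\<in>W. \<phi> (\<psi> y) = y) \<and>
        subspace S \<and> dim S = m \<and> \<phi> ` (M \<inter> U) = W \<inter> S"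
    by (elim exE) (erule that)
  have c: "chart M U W \<phi> \<psi> S"
    unfolding chart_def using H by (elim conjE) (intro conjI; assumption)
  have "chart M U W \<phi> \<psi> S \<and> x0 \<in> U \<and> dim S = m" using c H by (elim conjE) (intro conjI; assumption)
  then show ?thesis by (intro exI)
qed

lemma diff_along_curve:
  assumes oV: "open V" and x: "x \<in> M \<inter> V" and Fd: "(F has_derivative F') (at x)"
    and eq: "\<forall>y\<in>M \<inter> V. F y = f y"
    and c: "curve_through M x \<gamma>" and vd: "(\<gamma> has_vector_derivative v) (at 0)"
  shows "((f \<circ> \<gamma>) has_vector_derivative F' v) (at 0)"
proof -
  have g0: "\<gamma> 0 = x" and gM: "\<forall>t. \<gamma> t \<in> M" and sg: "smooth_on \<gamma> UNIV"
    using c unfolding curve_through_def by auto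
  have gc: "continuous_on UNIV \<gamma>" using smooth_onD(4)[OF sg] .
  have oO: "open (\<gamma> -` V)" by (rule open_vimage[OF oV gc])
  have Fd': "(F has_derivative F') (at (\<gamma> 0))" using Fd g0 by simp
  have "((F \<circ> \<gamma>) has_derivative (F' \<circ> (\<lambda>h. h *\<^sub>R v))) (at 0)"
    by (rule diff_chain_at[OF vd[unfolded has_vector_derivative_def] Fd'])
  moreover have "F' \<circ> (\<lambda>h. h *\<^sub>R v) = (\<lambda>h. h *\<^sub>R F' v)"
  proof -
    have lin: "linear F'" using has_derivative_linear[OF Fd] .
    show ?thesis by (rule ext) (simp add: o_def linear_scale[OF lin])
  qed
  ultimately have "((F \<circ> \<gamma>) has_vector_derivative F' v) (at 0)"
    unfolding has_vector_derivative_def by simp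
  then show ?thesis
    by (rule has_vector_derivative_transform_within_open[OF _ oO]) (use x g0 gM eq in auto)
qed

lemma differential_eq:
  assumes oV: "open V" and x: "x \<in> M \<inter> V" and Fd: "(F has_derivative F') (at x)"
    and eq: "\<forall>y\<in>M \<inter> V. F y = f y" and v: "v \<in> tangent_space M x"
  shows "differential M f x v = F' v"
proof -
  let ?P = "\<lambda>w. \<exists>\<gamma>. curve_through M x \<gamma> \<and> (\<gamma> has_vector_derivative v) (at 0) \<and> ((f \<circ> \<gamma>) has_vector_derivative w) (at 0)"
  obtain \<gamma> where c: "curve_through M x \<gamma>" and vd: "(\<gamma> has_vector_derivative v) (at 0)"
    using v unfolding tangent_space_def by blast
  have ex: "?P (F' v)"
    using c vd diff_along_curve[OF oV x Fd eq c vd] by blast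
  have uq: "w = F' v" if "?P w" for w
  proof -
    from that obtain \<gamma>' where c': "curve_through M x \<gamma>'" and vd': "(\<gamma>' has_vector_derivative v) (at 0)"
      and wd: "((f \<circ> \<gamma>') has_vector_derivative w) (at 0)" by blast
    show ?thesis
      by (rule vector_derivative_unique_at[OF wd diff_along_curve[OF oV x Fd eq c' vd']])
  qed
  show ?thesis unfolding differential_def by (rule someI2[of ?P, OF ex uq])
qed


lemma local_cont:
  fixes h :: "'a::metric_space \<Rightarrow> 'b::topological_space"
  assumes "\<forall>p\<in>M. \<exists>U F. p \<in> U \<and> open U \<and> continuous_on U F \<and> (\<forall>x\<in>M \<inter> U. F x = h x)"
  shows "continuous_on M h"
proof (rule Topological_Spaces.continuous_on_eq_continuous_within[THEN iffD2], rule ballI)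
  fix p assume p: "p \<in> M"
  obtain U F where U: "p \<in> U" "open U" "continuous_on U F" "\<forall>x\<in>M \<inter> U. F x = h x"
    using assms p by blast
  have "isCont F p" using U(1,2,3) continuous_on_eq_continuous_at by blast
  then have t: "(F \<longlongrightarrow> F p) (at p within M)"
    unfolding isCont_def by (rule tendsto_within_subset) simp
  have ev: "eventually (\<lambda>x. F x = h x) (at p within M)"
    unfolding eventually_at_topological using U(1,2,4) by blast
  have "(h \<longlongrightarrow> F p) (at p within M)" by (rule Lim_transform_eventually[OF t ev])
  moreover have "F p = h p" using U p by blast
  ultimately show "continuous (at p within M) h" unfolding continuous_within by simp
qed

lemma smooth_fun_on_cont:
  assumes "smooth_fun_on M h" shows "continuous_on M h"
proof (intro local_cont ballI)
  fix p assume "p \<in> M"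
  then obtain U F where "p \<in> U" "smooth_on F U" "\<forall>x\<in>M \<inter> U. F x = h x"
    using assms unfolding smooth_fun_on_def by blast
  then have "p \<in> U" "open U" "continuous_on U F" "\<forall>x\<in>M \<inter> U. F x = h x"
    using smooth_onD(1,4) by simp_all
  then show "\<exists>U F. p \<in> U \<and> open U \<and> continuous_on U F \<and> (\<forall>x\<in>M \<inter> U. F x = h x)"
    by (intro exI conjI)
qed

lemma smooth_map_cont:
  assumes "smooth_map M N f" shows "continuous_on M f"
proof (intro local_cont ballI)
  fix p assume "p \<in> M"
  then obtain U F where "p \<in> U" "smooth_on F U" "\<forall>x\<in>M \<inter> U. F x = f x"
    using assms unfolding smooth_map_def by blast
  then have "p \<in> U" "open U" "continuous_on U F" "\<forall>x\<in>M \<inter> U. F x = f x"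
    using smooth_onD(1,4) by simp_all
  then show "\<exists>U F. p \<in> U \<and> open U \<and> continuous_on U F \<and> (\<forall>x\<in>M \<inter> U. F x = f x)"
    by (intro exI conjI)
qed

lemma lin_expand:
  fixes L :: "'a::euclidean_space \<Rightarrow> 'b::real_vector"
  assumes "linear L"
  shows "L w = (\<Sum>i\<in>Basis. (w \<bullet> i) *\<^sub>R L i)"
proof -
  have "L w = L (\<Sum>i\<in>Basis. (w \<bullet> i) *\<^sub>R i)" by (simp add: euclidean_representation)
  also have "\<dots> = (\<Sum>i\<in>Basis. (w \<bullet> i) *\<^sub>R L i)"
    by (simp add: linear_sum[OF assms] linear_scale[OF assms])
  finally show ?thesis .
qed

lemma bilin_expand:
  fixes g :: "'a::euclidean_space \<Rightarrow> 'a \<Rightarrow> real"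
  assumes "bilinear g"
  shows "g u v = (\<Sum>i\<in>Basis. \<Sum>j\<in>Basis. (u \<bullet> i) * (v \<bullet> j) * g i j)"
proof -
  have l1: "linear (\<lambda>x. g x v)" using assms unfolding bilinear_def by blast
  have l2: "linear (\<lambda>y. g i y)" for i using assms unfolding bilinear_def by blast
  have "g u v = (\<Sum>i\<in>Basis. (u \<bullet> i) * g i v)" using lin_expand[OF l1, of u] by simp
  also have "\<dots> = (\<Sum>i\<in>Basis. (u \<bullet> i) * (\<Sum>j\<in>Basis. (v \<bullet> j) * g i j))"
    using lin_expand[OF l2, of _ v] by simp
  also have "\<dots> = (\<Sum>i\<in>Basis. \<Sum>j\<in>Basis. (u \<bullet> i) * (v \<bullet> j) * g i j)"
    by (simp add: sum_distrib_left mult.assoc)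
  finally show ?thesis .
qed

lemma cont_lin_family:
  fixes L :: "'z::topological_space \<Rightarrow> 'a::euclidean_space \<Rightarrow> 'b::real_normed_vector"
  assumes "\<forall>z\<in>X. linear (L z)" "\<forall>i\<in>Basis. continuous_on X (\<lambda>z. L z i)" "continuous_on X w"
  shows "continuous_on X (\<lambda>z. L z (w z))"
proof -
  have "continuous_on X (\<lambda>z. \<Sum>i\<in>Basis. (w z \<bullet> i) *\<^sub>R L z i)"
    using assms(2,3) by (intro continuous_intros) auto
  moreover have "continuous_on X (\<lambda>z. L z (w z)) = continuous_on X (\<lambda>z. \<Sum>i\<in>Basis. (w z \<bullet> i) *\<^sub>R L z i)"
    by (rule continuous_on_cong[OF refl]) (rule lin_expand, use assms(1) in blast)
  ultimately show ?thesis by simp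
qed

lemma cont_bilin_family:
  fixes g :: "'z::topological_space \<Rightarrow> 'a::euclidean_space \<Rightarrow> 'a \<Rightarrow> real"
  assumes "\<forall>z\<in>X. bilinear (g z)" "\<forall>i\<in>Basis. \<forall>j\<in>Basis. continuous_on X (\<lambda>z. g z i j)"
    "continuous_on X u" "continuous_on X v"
  shows "continuous_on X (\<lambda>z. g z (u z) (v z))"
proof -
  have "continuous_on X (\<lambda>z. \<Sum>i\<in>Basis. \<Sum>j\<in>Basis. (u z \<bullet> i) * (v z \<bullet> j) * g z i j)"
    using assms(2,3,4) by (intro continuous_intros) auto
  moreover have "continuous_on X (\<lambda>z. g z (u z) (v z)) = continuous_on X (\<lambda>z. \<Sum>i\<in>Basis. \<Sum>j\<in>Basis. (u z \<bullet> i) * (v z \<bullet> j) * g z i j)"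
    by (rule continuous_on_cong[OF refl]) (rule bilin_expand, use assms(1) in blast)
  ultimately show ?thesis by simp
qed

lemma tube_pos:
  fixes g :: "'a::metric_space \<times> 'b::metric_space \<Rightarrow> real"
  assumes "continuous_on (D \<times> K) g" "compact K" "x0 \<in> D" "\<forall>s\<in>K. g (x0, s) > 0"
  shows "\<exists>e>0. \<forall>x\<in>D. dist x x0 < e \<longrightarrow> (\<forall>s\<in>K. g (x, s) > 0)"
proof -
  have "\<exists>A. open A \<and> A \<inter> (D \<times> K) = g -` {0<..} \<inter> (D \<times> K)"
    using assms(1)[unfolded continuous_on_open_invariant, rule_format, OF open_greaterThan] .
  then obtain A where A: "open A" "A \<inter> (D \<times> K) = g -` {0<..} \<inter> (D \<times> K)" by blast
  have "{x0} \<times> K \<subseteq> A"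
  proof (rule subsetI)
    fix z assume "z \<in> {x0} \<times> K"
    then obtain s where z: "z = (x0, s)" "s \<in> K" by blast
    then have "z \<in> g -` {0<..} \<inter> (D \<times> K)" using assms(3,4) by simp
    then have "z \<in> A \<inter> (D \<times> K)" using A(2) by simp
    then show "z \<in> A" by simp
  qed
  then obtain X0 where X0: "x0 \<in> X0" "open X0" "X0 \<times> K \<subseteq> A"
    using Elementary_Topology.tube_lemma[OF assms(2) A(1)] by blast
  obtain e where e: "e > 0" "ball x0 e \<subseteq> X0" using X0(1,2) openE by blast
  have "\<forall>x\<in>D. dist x x0 < e \<longrightarrow> (\<forall>s\<in>K. g (x, s) > 0)"
  proof (intro ballI impI)
    fix x s assume x: "x \<in> D" "dist x x0 < e" and s: "s \<in> K"
    have "x \<in> ball x0 e" using x(2) by (simp add: dist_commute)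
    then have "x \<in> X0" using e(2) by (rule subsetD[rotated])
    then have "(x, s) \<in> X0 \<times> K" using s by simp
    then have "(x, s) \<in> A" using X0(3) by (rule subsetD[rotated])
    then have "(x, s) \<in> A \<inter> (D \<times> K)" using x(1) s by simp
    then have "(x, s) \<in> g -` {0<..}" using A(2) by simp
    then show "g (x, s) > 0" by simp
  qed
  then show ?thesis using e(1) by blast
qed

lemma dim_conf:
  assumes "conf_subspace T V gV gW C r" "subspace {v\<in>V. T v = 0}"
  shows "dim {v\<in>V. T v = 0} + dim C = dim V"
proof -
  have sC: "subspace C" and i: "{v\<in>V. T v = 0} \<inter> C = {0}"
    and s: "{k + c | k c. k \<in> {v\<in>V. T v = 0} \<and> c \<in> C} = V"
    using assms(1) unfolding conf_subspace_def by blast+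
  have "dim {k + c | k c. k \<in> {v\<in>V. T v = 0} \<and> c \<in> C} + dim ({v\<in>V. T v = 0} \<inter> C)
      = dim {v\<in>V. T v = 0} + dim C"
    by (rule dim_sums_Int[OF assms(2) sC])
  then show ?thesis using i s by (simp add: dim_eq_0)
qed

lemma locally_const_component:
  fixes h :: "'a::metric_space \<Rightarrow> nat"
  assumes loc: "\<forall>x0\<in>M. \<exists>e>0. \<forall>x\<in>M. dist x x0 < e \<longrightarrow> h x = h x0"
    and cc: "connected_component M x y"
  shows "h x = h y"
proof -
  obtain T where T: "connected T" "T \<subseteq> M" "x \<in> T" "y \<in> T"
    using cc unfolding connected_component_def by blast
  have cont: "continuous_on T (\<lambda>z. real (h z))"
    unfolding continuous_on_iff
  proof (intro ballI allI impI)
    fix z and e :: real assume z: "z \<in> T" and e: "e > 0"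
    obtain d where d: "d > 0" "\<forall>x\<in>M. dist x z < d \<longrightarrow> h x = h z" using loc z T(2) by blast
    show "\<exists>d>0. \<forall>x'\<in>T. dist x' z < d \<longrightarrow> dist (real (h x')) (real (h z)) < e"
      using d T(2) e by (intro exI[of _ d]) auto
  qed
  have "(\<lambda>z. real (h z)) constant_on T"
  proof (rule continuous_discrete_range_constant[OF T(1) cont])
    fix z assume "z \<in> T"
    show "\<exists>e>0. \<forall>w. w \<in> T \<and> real (h w) \<noteq> real (h z) \<longrightarrow> e \<le> norm (real (h w) - real (h z))"
    proof (intro exI[of _ 1] conjI allI impI)
      fix w assume "w \<in> T \<and> real (h w) \<noteq> real (h z)"
      then have "h w \<noteq> h z" by simp
      then show "1 \<le> norm (real (h w) - real (h z))" by (cases "h w < h z") auto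
    qed simp
  qed
  then obtain c where c: "\<forall>z\<in>T. real (h z) = c" unfolding constant_on_def by blast
  then have "real (h x) = real (h y)" using T(3,4) by simp
  then show ?thesis by simp
qed


locale loc_setup = chart M U W \<phi> \<psi> S
  for M :: "'a::euclidean_space set" and U W \<phi> \<psi> S +
  fixes f :: "'a \<Rightarrow> 'b::euclidean_space" and F :: "'a \<Rightarrow> 'b" and UF :: "'a set"
  assumes sF: "smooth_on F UF" and Feq: "\<forall>x\<in>M \<inter> UF. F x = f x"
begin

definition DF where "DF x = frechet_derivative F (at x)"
definition A where "A x s = DF x (B x s)"

lemma oUF: "open UF" using smooth_onD(1)[OF sF] .

lemma F_diff: "x \<in> UF \<Longrightarrow> (F has_derivative DF x) (at x)"
  unfolding DF_def using smooth_onD(2)[OF sF] frechet_derivative_works by blast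

lemma DF_linear: "x \<in> UF \<Longrightarrow> linear (DF x)"
  using has_derivative_linear[OF F_diff] .

lemma A_linear:
  assumes "x \<in> U" "x \<in> UF" shows "linear (A x)"
proof -
  have "A x = DF x \<circ> B x" by (rule ext) (simp add: A_def)
  then show ?thesis using linear_compose[OF B_linear[OF assms(1)] DF_linear[OF assms(2)]] by simp
qed

lemma diffl:
  assumes "x \<in> M" "x \<in> UF" "v \<in> tangent_space M x"
  shows "differential M f x v = DF x v"
  by (rule differential_eq[OF oUF _ F_diff[OF assms(2)] Feq assms(3)]) (use assms in simp)

lemma T_eq: "x \<in> M \<Longrightarrow> x \<in> U \<Longrightarrow> tangent_space M x = B x ` S"
  using tangent_eq by simp

lemma T_sub: "x \<in> M \<Longrightarrow> x \<in> U \<Longrightarrow> subspace (tangent_space M x)"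
  using T_eq real_vector.linear_subspace_image[OF B_linear sS] by simp

lemma B_inj_on: "x \<in> U \<Longrightarrow> inj_on (B x) X"
  using inj_on_subset[OF B_inj subset_UNIV] by blast

lemma T_dim: "x \<in> M \<Longrightarrow> x \<in> U \<Longrightarrow> dim (tangent_space M x) = dim S"
  using T_eq dim_image_eq[OF B_linear B_inj_on] by simp

lemma ker_eq:
  assumes x: "x \<in> M" "x \<in> U" "x \<in> UF"
  shows "{v \<in> tangent_space M x. differential M f x v = 0} = B x ` (S \<inter> {s. A x s = 0})"
proof (rule equalityI; rule subsetI)
  fix v assume v: "v \<in> {v \<in> tangent_space M x. differential M f x v = 0}"
  then have "v \<in> B x ` S" using T_eq[OF x(1,2)] by simp
  then obtain s where s: "s \<in> S" "v = B x s" by blast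
  have vT: "v \<in> tangent_space M x" "differential M f x v = 0" using v by simp_all
  have "A x s = DF x v" using s unfolding A_def by simp
  also have "\<dots> = differential M f x v" using diffl[OF x(1,3) vT(1)] by simp
  also have "\<dots> = 0" by (rule vT(2))
  finally have "A x s = 0" .
  then show "v \<in> B x ` (S \<inter> {s. A x s = 0})" using s by blast
next
  fix v assume "v \<in> B x ` (S \<inter> {s. A x s = 0})"
  then obtain s where s: "s \<in> S" "A x s = 0" "v = B x s" by blast
  have vT: "v \<in> tangent_space M x" using T_eq[OF x(1,2)] s by simp
  have "differential M f x v = 0" using diffl[OF x(1,3) vT] s unfolding A_def by simp
  then show "v \<in> {v \<in> tangent_space M x. differential M f x v = 0}" using vT by simp
qed

lemma kerS_sub: "x \<in> U \<Longrightarrow> x \<in> UF \<Longrightarrow> subspace (S \<inter> {s. A x s = 0})"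
  using real_vector.subspace_inter[OF sS real_vector.linear_subspace_kernel[OF A_linear]] by simp

lemma ker_sub: "x \<in> M \<Longrightarrow> x \<in> U \<Longrightarrow> x \<in> UF \<Longrightarrow> subspace {v \<in> tangent_space M x. differential M f x v = 0}"
  using ker_eq real_vector.linear_subspace_image[OF B_linear kerS_sub] by simp

lemma ker_dim: "x \<in> M \<Longrightarrow> x \<in> U \<Longrightarrow> x \<in> UF \<Longrightarrow>
   dim {v \<in> tangent_space M x. differential M f x v = 0} = dim (S \<inter> {s. A x s = 0})"
  using ker_eq dim_image_eq[OF B_linear B_inj_on] by simp

lemma pull:
  assumes x: "x \<in> M" "x \<in> U" and C: "C \<subseteq> tangent_space M x" "subspace C"
  shows "subspace (S \<inter> {s. B x s \<in> C})" "C = B x ` (S \<inter> {s. B x s \<in> C})"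
    "dim (S \<inter> {s. B x s \<in> C}) = dim C"
proof -
  show "subspace (S \<inter> {s. B x s \<in> C})"
    using real_vector.subspace_inter[OF sS real_vector.linear_subspace_linear_preimage[OF B_linear[OF x(2)] C(2)]] .
  show ceq: "C = B x ` (S \<inter> {s. B x s \<in> C})"
  proof (rule equalityI; rule subsetI)
    fix c assume c: "c \<in> C"
    then have "c \<in> B x ` S" using C(1) T_eq[OF x] by blast
    then obtain s where "s \<in> S" "c = B x s" by blast
    then show "c \<in> B x ` (S \<inter> {s. B x s \<in> C})" using c by blast
  next
    fix c assume "c \<in> B x ` (S \<inter> {s. B x s \<in> C})"
    then show "c \<in> C" by blast
  qed
  show "dim (S \<inter> {s. B x s \<in> C}) = dim C"
    using dim_image_eq[OF B_linear[OF x(2)] B_inj_on[OF x(2)], of "S \<inter> {s. B x s \<in> C}"] ceq by simp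
qed


lemma local_const:
  fixes gM :: "'a \<Rightarrow> 'a \<Rightarrow> 'a \<Rightarrow> real" and gN :: "'b \<Rightarrow> 'b \<Rightarrow> 'b \<Rightarrow> real" and N :: "'b set"
    and \<Lambda> :: "'a \<Rightarrow> real"
  assumes rM: "riemannian_metric M gM" and rN: "riemannian_metric N gN"
    and sm: "smooth_map M N f" and Lsm: "smooth_fun_on M \<Lambda>" and Lpos: "\<forall>x\<in>M. \<Lambda> x > 0"
    and geo: "\<forall>x\<in>M. \<exists>C. conf_subspace (differential M f x) (tangent_space M x) (gM x) (gN (f x)) C (\<Lambda> x)"
    and dimC: "\<And>x C r. x \<in> M \<Longrightarrow> conf_subspace (differential M f x) (tangent_space M x) (gM x) (gN (f x)) C r
        \<Longrightarrow> dim C + dim {v \<in> tangent_space M x. differential M f x v = 0} = m"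
    and x0: "x0 \<in> M" "x0 \<in> U" "x0 \<in> UF" and dS: "dim S = m"
  shows "\<exists>e>0. \<forall>x\<in>M. dist x x0 < e \<longrightarrow>
     dim {v \<in> tangent_space M x. differential M f x v = 0} = dim {v \<in> tangent_space M x0. differential M f x0 v = 0}"
proof -
  define kd where "kd x = dim {v \<in> tangent_space M x. differential M f x v = 0}" for x
  define D where "D = M \<inter> U \<inter> UF"
  have x0D: "x0 \<in> D" using x0 by (simp add: D_def)
  have DM: "x \<in> D \<Longrightarrow> x \<in> M" "x \<in> D \<Longrightarrow> x \<in> U" "x \<in> D \<Longrightarrow> x \<in> UF" for x by (simp_all add: D_def)
  have kdS: "kd x = dim (S \<inter> {s. A x s = 0})" if "x \<in> D" for x
    unfolding kd_def using ker_dim[OF DM[OF that]] .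
  have cfst: "continuous_on (D \<times> (UNIV::'a set)) fst" by (intro continuous_intros)
  have csnd: "continuous_on (D \<times> (UNIV::'a set)) snd" by (intro continuous_intros)
  have fstD: "fst ` (D \<times> (UNIV::'a set)) \<subseteq> D" by auto
  have cfstU: "continuous_on (D \<times> (UNIV::'a set)) (\<lambda>z. \<phi> (fst z))"
    by (rule continuous_on_compose2[OF smooth_onD(4)[OF sphi] cfst]) (auto simp: D_def)
  have cB: "continuous_on (D \<times> (UNIV::'a set)) (\<lambda>z. B (fst z) (snd z))"
  proof (rule cont_lin_family[OF _ _ csnd])
    show "\<forall>z\<in>D \<times> (UNIV::'a set). linear (B (fst z))" using B_linear DM(2) by auto
    show "\<forall>i\<in>Basis. continuous_on (D \<times> (UNIV::'a set)) (\<lambda>z. B (fst z) i)"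
    proof
      fix i :: 'a
      have "continuous_on (D \<times> (UNIV::'a set)) (\<lambda>z. frechet_derivative \<psi> (at (\<phi> (fst z))) i)"
        by (rule continuous_on_compose2[OF smooth_onD(3)[OF spsi, rule_format, of i] cfstU])
           (use phiW DM(2) in auto)
      then show "continuous_on (D \<times> (UNIV::'a set)) (\<lambda>z. B (fst z) i)" unfolding B_def .
    qed
  qed
  have cA: "continuous_on (D \<times> (UNIV::'a set)) (\<lambda>z. A (fst z) (snd z))"
  proof -
    have "continuous_on (D \<times> (UNIV::'a set)) (\<lambda>z. DF (fst z) (B (fst z) (snd z)))"
    proof (rule cont_lin_family[OF _ _ cB])
      show "\<forall>z\<in>D \<times> (UNIV::'a set). linear (DF (fst z))" using DF_linear DM(3) by auto
      show "\<forall>i\<in>Basis. continuous_on (D \<times> (UNIV::'a set)) (\<lambda>z. DF (fst z) i)"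
      proof
        fix i :: 'a
        have "continuous_on (D \<times> (UNIV::'a set)) (\<lambda>z. frechet_derivative F (at (fst z)) i)"
          by (rule continuous_on_compose2[OF smooth_onD(3)[OF sF, rule_format, of i] cfst]) (use DM(3) in auto)
        then show "continuous_on (D \<times> (UNIV::'a set)) (\<lambda>z. DF (fst z) i)" unfolding DF_def .
      qed
    qed
    then show ?thesis unfolding A_def .
  qed
  have gMbil: "bilinear (gM x)" if "x \<in> M" for x using rM that unfolding riemannian_metric_def by blast
  have gNbil: "bilinear (gN y)" if "y \<in> N" for y using rN that unfolding riemannian_metric_def by blast
  have gMpos: "gM x u u > 0" if "x \<in> M" "u \<in> tangent_space M x" "u \<noteq> 0" for x u
    using rM that unfolding riemannian_metric_def by blast
  have fN: "f x \<in> N" if "x \<in> M" for x using sm that unfolding smooth_map_def by blast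
  have fcont: "continuous_on M f" by (rule smooth_map_cont[OF sm])
  have cgM: "continuous_on (D \<times> (UNIV::'a set)) (\<lambda>z. gM (fst z) (B (fst z) (snd z)) (B (fst z) (snd z)))"
  proof (rule cont_bilin_family[where g="\<lambda>z. gM (fst z)", OF _ _ cB cB])
    show "\<forall>z\<in>D \<times> (UNIV::'a set). bilinear (gM (fst z))" using gMbil DM(1) by auto
    show "\<forall>i\<in>Basis. \<forall>j\<in>Basis. continuous_on (D \<times> (UNIV::'a set)) (\<lambda>z. gM (fst z) i j)"
    proof (intro ballI)
      fix i j :: 'a
      have "smooth_fun_on M (\<lambda>p. gM p i j)" using rM unfolding riemannian_metric_def by blast
      then have "continuous_on M (\<lambda>p. gM p i j)" by (rule smooth_fun_on_cont)
      then show "continuous_on (D \<times> (UNIV::'a set)) (\<lambda>z. gM (fst z) i j)"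
        by (rule continuous_on_compose2[OF _ cfst]) (use DM(1) in auto)
    qed
  qed
  have cfD: "continuous_on (D \<times> (UNIV::'a set)) (\<lambda>z. f (fst z))"
    by (rule continuous_on_compose2[OF fcont cfst]) (use DM(1) in auto)
  have cgN: "continuous_on (D \<times> (UNIV::'a set)) (\<lambda>z. gN (f (fst z)) (A (fst z) (snd z)) (A (fst z) (snd z)))"
  proof (rule cont_bilin_family[where g="\<lambda>z. gN (f (fst z))", OF _ _ cA cA])
    show "\<forall>z\<in>D \<times> (UNIV::'a set). bilinear (gN (f (fst z)))" using gNbil fN DM(1) by auto
    show "\<forall>i\<in>Basis. \<forall>j\<in>Basis. continuous_on (D \<times> (UNIV::'a set)) (\<lambda>z. gN (f (fst z)) i j)"
    proof (intro ballI)
      fix i j :: 'b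
      have "smooth_fun_on N (\<lambda>p. gN p i j)" using rN unfolding riemannian_metric_def by blast
      then have "continuous_on N (\<lambda>p. gN p i j)" by (rule smooth_fun_on_cont)
      then show "continuous_on (D \<times> (UNIV::'a set)) (\<lambda>z. gN (f (fst z)) i j)"
        by (rule continuous_on_compose2[OF _ cfD]) (use DM(1) fN in auto)
    qed
  qed
  have cL: "continuous_on (D \<times> (UNIV::'a set)) (\<lambda>z. \<Lambda> (fst z))"
    by (rule continuous_on_compose2[OF smooth_fun_on_cont[OF Lsm] cfst]) (use DM(1) in auto)
  have Bnz: "B x s \<noteq> 0" if "x \<in> U" "s \<noteq> 0" for x s
  proof
    assume "B x s = 0"
    then have "B x s = B x 0" using linear_0[OF B_linear[OF that(1)]] by simp
    then show False using B_inj[OF that(1)] that(2) unfolding inj_def by blast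
  qed
  have BT: "B x s \<in> tangent_space M x" if "x \<in> D" "s \<in> S" for x s
    using T_eq[OF DM(1,2)[OF that(1)]] that(2) by simp
  have Ascale: "A x (c *\<^sub>R s) = c *\<^sub>R A x s" if "x \<in> D" for x c s
    using linear_scale[OF A_linear[OF DM(2,3)[OF that]]] .
  have norm1: "s /\<^sub>R norm s \<in> sphere 0 1" if "s \<noteq> 0" for s :: 'a
    using that by (simp add: norm_divide)
  obtain C0 where C0: "conf_subspace (differential M f x0) (tangent_space M x0) (gM x0) (gN (f x0)) C0 (\<Lambda> x0)"
    using geo x0(1) by blast
  have C0s: "subspace C0" "C0 \<subseteq> tangent_space M x0"
    and C0i: "{v\<in>tangent_space M x0. differential M f x0 v = 0} \<inter> C0 = {0}"
    using C0 unfolding conf_subspace_def by blast+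
  define E0 where "E0 = S \<inter> {s. B x0 s \<in> C0}"
  have sE0: "subspace E0" and dE0: "dim E0 = dim C0"
    using pull[OF x0(1,2) C0s(2,1)] unfolding E0_def by simp_all
  have dC0: "dim C0 + kd x0 = m" using dimC[OF x0(1) C0] unfolding kd_def .
  define K1 where "K1 = sphere (0::'a) 1 \<inter> E0"
  have K1c: "compact K1" unfolding K1_def by (rule compact_Int_closed[OF compact_sphere closed_subspace[OF sE0]])
  have g1c: "continuous_on (D \<times> K1) (\<lambda>z. norm (A (fst z) (snd z)))"
    by (rule continuous_on_subset[OF continuous_on_norm[OF cA]]) auto
  have g1p: "\<forall>s\<in>K1. norm (A (fst (x0, s)) (snd (x0, s))) > 0"
  proof
    fix s assume s: "s \<in> K1"
    then have sS: "s \<in> S" and sC: "B x0 s \<in> C0" and sn: "s \<noteq> 0" unfolding K1_def E0_def by auto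
    have bT: "B x0 s \<in> tangent_space M x0" using BT[OF x0D sS] .
    have "A x0 s \<noteq> 0"
    proof
      assume "A x0 s = 0"
      then have "differential M f x0 (B x0 s) = 0" using diffl[OF x0(1,3) bT] unfolding A_def by simp
      then have "B x0 s \<in> {v\<in>tangent_space M x0. differential M f x0 v = 0} \<inter> C0" using bT sC by simp
      then have "B x0 s = 0" using C0i by blast
      then show False using Bnz[OF x0(2) sn] by simp
    qed
    then show "norm (A (fst (x0, s)) (snd (x0, s))) > 0" by simp
  qed
  obtain e1 where e1: "e1 > 0" "\<forall>x\<in>D. dist x x0 < e1 \<longrightarrow> (\<forall>s\<in>K1. norm (A (fst (x, s)) (snd (x, s))) > 0)"
    using tube_pos[OF g1c K1c x0D g1p] by blast
  have up: "kd x \<le> kd x0" if x: "x \<in> D" "dist x x0 < e1" for x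
  proof -
    define Kx where "Kx = S \<inter> {s. A x s = 0}"
    have sKx: "subspace Kx" unfolding Kx_def using kerS_sub[OF DM(2,3)[OF x(1)]] .
    have int0: "E0 \<inter> Kx \<subseteq> {0}"
    proof
      fix s assume s: "s \<in> E0 \<inter> Kx"
      show "s \<in> {0}"
      proof (rule ccontr)
        assume "s \<notin> {0}"
        then have sn: "s \<noteq> 0" by simp
        have "s /\<^sub>R norm s \<in> E0" using s real_vector.subspace_scale[OF sE0] by blast
        then have sK: "s /\<^sub>R norm s \<in> K1" using norm1[OF sn] unfolding K1_def by blast
        have "A x (s /\<^sub>R norm s) = 0" using Ascale[OF x(1)] s unfolding Kx_def by simp
        then show False using e1(2) x sK by fastforce
      qed
    qed
    have "dim {a + b |a b. a \<in> E0 \<and> b \<in> Kx} + dim (E0 \<inter> Kx) = dim E0 + dim Kx"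
      by (rule dim_sums_Int[OF sE0 sKx])
    moreover have "dim (E0 \<inter> Kx) = 0" using int0 by (simp add: dim_eq_0)
    moreover have "dim {a + b |a b. a \<in> E0 \<and> b \<in> Kx} \<le> dim S"
    proof (rule dim_subset, rule subsetI)
      fix y assume "y \<in> {a + b |a b. a \<in> E0 \<and> b \<in> Kx}"
      then obtain a b where "y = a + b" "a \<in> S" "b \<in> S" unfolding E0_def Kx_def by blast
      then show "y \<in> S" using real_vector.subspace_add[OF sS] by simp
    qed
    moreover have "kd x = dim Kx" unfolding Kx_def by (rule kdS[OF x(1)])
    ultimately show ?thesis using dE0 dC0 dS by linarith
  qed
  define K0 where "K0 = S \<inter> {s. A x0 s = 0}"
  have sK0: "subspace K0" unfolding K0_def using kerS_sub[OF x0(2,3)] .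
  define K2 where "K2 = sphere (0::'a) 1 \<inter> K0"
  have K2c: "compact K2" unfolding K2_def by (rule compact_Int_closed[OF compact_sphere closed_subspace[OF sK0]])
  define g2 where "g2 = (\<lambda>z. \<Lambda> (fst z) * gM (fst z) (B (fst z) (snd z)) (B (fst z) (snd z))
      - gN (f (fst z)) (A (fst z) (snd z)) (A (fst z) (snd z)))"
  have g2c: "continuous_on (D \<times> K2) g2"
  proof -
    have "continuous_on (D \<times> (UNIV::'a set)) g2" unfolding g2_def
      by (intro continuous_on_diff continuous_on_mult cL cgM cgN)
    then show ?thesis by (rule continuous_on_subset) auto
  qed
  have g2p: "\<forall>s\<in>K2. g2 (x0, s) > 0"
  proof
    fix s assume s: "s \<in> K2"
    then have sS: "s \<in> S" and sA: "A x0 s = 0" and sn: "s \<noteq> 0" unfolding K2_def K0_def by auto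
    have "gN (f x0) (A x0 s) (A x0 s) = 0" using sA bilinear_lzero[OF gNbil[OF fN[OF x0(1)]]] by simp
    moreover have "gM x0 (B x0 s) (B x0 s) > 0" using gMpos[OF x0(1) BT[OF x0D sS] Bnz[OF x0(2) sn]] .
    moreover have "\<Lambda> x0 > 0" using Lpos x0(1) by blast
    ultimately show "g2 (x0, s) > 0" unfolding g2_def by simp
  qed
  obtain e2 where e2: "e2 > 0" "\<forall>x\<in>D. dist x x0 < e2 \<longrightarrow> (\<forall>s\<in>K2. g2 (x, s) > 0)"
    using tube_pos[OF g2c K2c x0D g2p] by blast
  have kd0: "kd x0 = dim K0" unfolding K0_def by (rule kdS[OF x0D])
  have low: "kd x0 \<le> kd x" if x: "x \<in> D" "dist x x0 < e2" for x
  proof (rule ccontr)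
    assume lt: "\<not> kd x0 \<le> kd x"
    obtain Cx where Cx: "conf_subspace (differential M f x) (tangent_space M x) (gM x) (gN (f x)) Cx (\<Lambda> x)"
      using geo DM(1)[OF x(1)] by blast
    have Cxs: "subspace Cx" "Cx \<subseteq> tangent_space M x"
      and Cxc: "\<forall>u\<in>Cx. \<forall>v\<in>Cx. gN (f x) (differential M f x u) (differential M f x v) = \<Lambda> x * gM x u v"
      using Cx unfolding conf_subspace_def by blast+
    define Ex where "Ex = S \<inter> {s. B x s \<in> Cx}"
    have sEx: "subspace Ex" and dEx: "dim Ex = dim Cx"
      using pull[OF DM(1,2)[OF x(1)] Cxs(2,1)] unfolding Ex_def by simp_all
    have dCx: "dim Cx + kd x = m" using dimC[OF DM(1)[OF x(1)] Cx] unfolding kd_def .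
    have "dim {a + b |a b. a \<in> Ex \<and> b \<in> K0} + dim (Ex \<inter> K0) = dim Ex + dim K0"
      by (rule dim_sums_Int[OF sEx sK0])
    moreover have "dim {a + b |a b. a \<in> Ex \<and> b \<in> K0} \<le> dim S"
    proof (rule dim_subset, rule subsetI)
      fix y assume "y \<in> {a + b |a b. a \<in> Ex \<and> b \<in> K0}"
      then obtain a b where "y = a + b" "a \<in> S" "b \<in> S" unfolding Ex_def K0_def by blast
      then show "y \<in> S" using real_vector.subspace_add[OF sS] by simp
    qed
    ultimately have "dim (Ex \<inter> K0) \<noteq> 0" using dEx dCx kd0 lt dS by linarith
    then have "\<not> Ex \<inter> K0 \<subseteq> {0}" by (simp add: dim_eq_0)
    then obtain s where s: "s \<in> Ex" "s \<in> K0" "s \<noteq> 0" by blast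
    define s' where "s' = s /\<^sub>R norm s"
    have s'E: "s' \<in> Ex" unfolding s'_def using s(1) real_vector.subspace_scale[OF sEx] by blast
    have s'K: "s' \<in> K0" unfolding s'_def using s(2) real_vector.subspace_scale[OF sK0] by blast
    have s'2: "s' \<in> K2" unfolding K2_def s'_def using norm1[OF s(3)] s'K[unfolded s'_def] by blast
    have s'S: "s' \<in> S" and uC: "B x s' \<in> Cx" using s'E unfolding Ex_def by simp_all
    have uT: "B x s' \<in> tangent_space M x" using uC Cxs(2) by blast
    have du: "differential M f x (B x s') = A x s'" using diffl[OF DM(1,3)[OF x(1)] uT] unfolding A_def by simp
    have "gN (f x) (A x s') (A x s') = \<Lambda> x * gM x (B x s') (B x s')"
      using Cxc uC du by metis
    then have "g2 (x, s') = 0" unfolding g2_def by simp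
    then show False using e2(2) x s'2 by fastforce
  qed
  obtain e3 where e3: "e3 > 0" "ball x0 e3 \<subseteq> U \<inter> UF"
    using openE[OF open_Int[OF oU oUF]] x0(2,3) by blast
  define e where "e = min e1 (min e2 e3)"
  have "\<forall>x\<in>M. dist x x0 < e \<longrightarrow> kd x = kd x0"
  proof (intro ballI impI)
    fix x assume xM: "x \<in> M" and dx: "dist x x0 < e"
    have "x \<in> ball x0 e3" using dx unfolding e_def by (simp add: dist_commute)
    then have xD: "x \<in> D" using e3(2) xM unfolding D_def by blast
    have "kd x \<le> kd x0" using up[OF xD] dx unfolding e_def by simp
    moreover have "kd x0 \<le> kd x" using low[OF xD] dx unfolding e_def by simp
    ultimately show "kd x = kd x0" by simp
  qed
  moreover have "e > 0" unfolding e_def using e1(1) e2(1) e3(1) by simp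
  ultimately show ?thesis unfolding kd_def by blast
qed

end


lemma setup_exists:
  fixes M :: "'a::euclidean_space set" and N :: "'b::euclidean_space set" and f :: "'a \<Rightarrow> 'b"
  assumes "embedded_submanifold M m" "smooth_map M N f" "x0 \<in> M"
  shows "\<exists>U W \<phi> \<psi> S F UF. loc_setup M U W \<phi> \<psi> S f F UF \<and> x0 \<in> U \<and> x0 \<in> UF \<and> dim S = m"
proof -
  obtain U W \<phi> \<psi> S where ch: "chart M U W \<phi> \<psi> S" "x0 \<in> U" "dim S = m"
    using chart_exists[OF assms(1,3)] by blast
  obtain UF F where F: "x0 \<in> UF" "smooth_on F UF" "\<forall>x\<in>M \<inter> UF. F x = f x"
    using assms(2,3) unfolding smooth_map_def by blast
  have "loc_setup M U W \<phi> \<psi> S f F UF"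
    by (intro loc_setup.intro loc_setup_axioms.intro ch(1) F(2,3))
  then show ?thesis using ch(2,3) F(1) by blast
qed

theorem mainTheorem8:
  fixes M :: "'a::euclidean_space set" and N :: "'b::euclidean_space set"
    and gM :: "'a \<Rightarrow> 'a \<Rightarrow> 'a \<Rightarrow> real" and gN :: "'b \<Rightarrow> 'b \<Rightarrow> 'b \<Rightarrow> real"
    and f :: "'a \<Rightarrow> 'b" and m n :: nat
  assumes "embedded_submanifold M m" and "compact M"
    and "embedded_submanifold N n"
    and "riemannian_metric M gM" and "riemannian_metric N gN"
    and "conformal_riemannian_morphism M gM N gN f"
  shows "\<forall>x\<in>M. \<forall>y\<in>M. connected_component M x y \<longrightarrow>
           dim {v \<in> tangent_space M x. differential M f x v = 0}
             = dim {v \<in> tangent_space M y. differential M f y v = 0} \<and>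
           (\<forall>Cx Cy rx ry.
              conf_subspace (differential M f x) (tangent_space M x) (gM x) (gN (f x)) Cx rx \<and>
              conf_subspace (differential M f y) (tangent_space M y) (gM y) (gN (f y)) Cy ry
              \<longrightarrow> dim Cx = dim Cy)"
proof -
  obtain \<Lambda> where Lsm: "smooth_fun_on M \<Lambda>" and Lpos: "\<forall>x\<in>M. \<Lambda> x > 0"
    and geo0: "\<forall>x\<in>M. geometric_function (differential M f x) (tangent_space M x) (gM x) (gN (f x)) (\<Lambda> x)"
    using assms(6) unfolding conformal_riemannian_morphism_def by blast
  have sm: "smooth_map M N f" using assms(6) unfolding conformal_riemannian_morphism_def by blast
  have geo: "\<forall>x\<in>M. \<exists>C. conf_subspace (differential M f x) (tangent_space M x) (gM x) (gN (f x)) C (\<Lambda> x)"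
    using geo0 unfolding geometric_function_def by blast
  define kd where "kd x = dim {v \<in> tangent_space M x. differential M f x v = 0}" for x
  have dimC: "dim C + dim {v \<in> tangent_space M x. differential M f x v = 0} = m"
    if x: "x \<in> M" and c: "conf_subspace (differential M f x) (tangent_space M x) (gM x) (gN (f x)) C r"
    for x C r
  proof -
    obtain U W \<phi> \<psi> S F UF where L: "loc_setup M U W \<phi> \<psi> S f F UF" "x \<in> U" "x \<in> UF" "dim S = m"
      using setup_exists[OF assms(1) sm x] by blast
    have "subspace {v \<in> tangent_space M x. differential M f x v = 0}"
      by (rule loc_setup.ker_sub[OF L(1) x L(2) L(3)])
    then have "dim {v \<in> tangent_space M x. differential M f x v = 0} + dim C = dim (tangent_space M x)"
      by (rule dim_conf[OF c])
    moreover have "dim (tangent_space M x) = dim S" by (rule loc_setup.T_dim[OF L(1) x L(2)])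
    ultimately show ?thesis using L(4) by simp
  qed
  have loc: "\<forall>x0\<in>M. \<exists>e>0. \<forall>x\<in>M. dist x x0 < e \<longrightarrow> kd x = kd x0"
  proof
    fix x0 assume x0: "x0 \<in> M"
    obtain U W \<phi> \<psi> S F UF where L: "loc_setup M U W \<phi> \<psi> S f F UF" "x0 \<in> U" "x0 \<in> UF" "dim S = m"
      using setup_exists[OF assms(1) sm x0] by blast
    show "\<exists>e>0. \<forall>x\<in>M. dist x x0 < e \<longrightarrow> kd x = kd x0"
      unfolding kd_def
      by (rule loc_setup.local_const[OF L(1) assms(4) assms(5) sm Lsm Lpos geo dimC x0 L(2) L(3) L(4)])
  qed
  have kc: "kd x = kd y" if "connected_component M x y" for x y
    by (rule locally_const_component[OF loc that])
  show ?thesis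
  proof (intro ballI impI)
    fix x y assume x: "x \<in> M" and y: "y \<in> M" and cc: "connected_component M x y"
    have k: "kd x = kd y" by (rule kc[OF cc])
    show "dim {v \<in> tangent_space M x. differential M f x v = 0}
             = dim {v \<in> tangent_space M y. differential M f y v = 0} \<and>
           (\<forall>Cx Cy rx ry.
              conf_subspace (differential M f x) (tangent_space M x) (gM x) (gN (f x)) Cx rx \<and>
              conf_subspace (differential M f y) (tangent_space M y) (gM y) (gN (f y)) Cy ry
              \<longrightarrow> dim Cx = dim Cy)"
    proof (intro conjI allI impI)
      show "dim {v \<in> tangent_space M x. differential M f x v = 0}
             = dim {v \<in> tangent_space M y. differential M f y v = 0}" using k unfolding kd_def .
      fix Cx Cy rx ry
      assume c: "conf_subspace (differential M f x) (tangent_space M x) (gM x) (gN (f x)) Cx rx \<and>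
              conf_subspace (differential M f y) (tangent_space M y) (gM y) (gN (f y)) Cy ry"
      have "dim Cx + kd x = m" using dimC[OF x] c unfolding kd_def by blast
      moreover have "dim Cy + kd y = m" using dimC[OF y] c unfolding kd_def by blast
      ultimately show "dim Cx = dim Cy" using k by simp
    qed
  qed
qed

end
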